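(* $\operatorname{RBM}_{3,2}\subseteq\mathcal{M}_{3,3}$.
   Context: A distribution of three binary random variables is a $2\times2\times2$ tensor $p=(p_{ijk})_{i,j,k\in\{0,1\}}$ with nonnegative entries summing to $1$; the set of these is the simplex $\Delta_7$. For $a,b,c\in\mathbb{R}^2_{\ge0}$, $a\otimes b\otimes c$ is the tensor with entries $a_ib_jc_k$. $\mathcal{M}_{3,3}$ is the set of $p\in\Delta_7$ that are a sum of three tensors of the form $a\otimes b\otimes c$ with $a,b,c\in\mathbb{R}^2_{\ge0}$. $\operatorname{RBM}_{3,2}$ is the set of $p\in\Delta_7$ of the form $p=(a_1\otimes b_1\otimes c_1+d_1\otimes e_1\otimes f_1)*(a_2\otimes b_2\otimes c_2+d_2\otimes e_2\otimes f_2)$ with all vectors in $\mathbb{R}^2_{\ge0}$, where $*$ is the entrywise (Hadamard) product. *)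

theory Defs
  imports Main "HOL-Analysis.Analysis"
begin

text \<open>Vectors in R^2 are indexed by bool (False ~ 0, True ~ 1);
  2x2x2 tensors are functions bool => bool => bool => real.\<close>

type_synonym vec2 = "bool \<Rightarrow> real"
type_synonym tensor3 = "bool \<Rightarrow> bool \<Rightarrow> bool \<Rightarrow> real"

definition nonneg2 :: "vec2 \<Rightarrow> bool" where
  "nonneg2 a \<longleftrightarrow> (\<forall>i. 0 \<le> a i)"

definition outer3 :: "vec2 \<Rightarrow> vec2 \<Rightarrow> vec2 \<Rightarrow> tensor3" where
  "outer3 a b c = (\<lambda>i j k. a i * b j * c k)"

definition simplex7 :: "tensor3 set" where
  "simplex7 = {p. (\<forall>i j k. 0 \<le> p i j k) \<and> (\<Sum>i\<in>UNIV. \<Sum>j\<in>UNIV. \<Sum>k\<in>UNIV. p i j k) = 1}"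

definition M33 :: "tensor3 set" where
  "M33 = {p \<in> simplex7. \<exists>a1 b1 c1 a2 b2 c2 a3 b3 c3.
      nonneg2 a1 \<and> nonneg2 b1 \<and> nonneg2 c1 \<and>
      nonneg2 a2 \<and> nonneg2 b2 \<and> nonneg2 c2 \<and>
      nonneg2 a3 \<and> nonneg2 b3 \<and> nonneg2 c3 \<and>
      p = (\<lambda>i j k. outer3 a1 b1 c1 i j k + outer3 a2 b2 c2 i j k + outer3 a3 b3 c3 i j k)}"

definition RBM32 :: "tensor3 set" where
  "RBM32 = {p \<in> simplex7. \<exists>a1 b1 c1 d1 e1 f1 a2 b2 c2 d2 e2 f2.
      nonneg2 a1 \<and> nonneg2 b1 \<and> nonneg2 c1 \<and>
      nonneg2 d1 \<and> nonneg2 e1 \<and> nonneg2 f1 \<and>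
      nonneg2 a2 \<and> nonneg2 b2 \<and> nonneg2 c2 \<and>
      nonneg2 d2 \<and> nonneg2 e2 \<and> nonneg2 f2 \<and>
      p = (\<lambda>i j k. (outer3 a1 b1 c1 i j k + outer3 d1 e1 f1 i j k) *
                   (outer3 a2 b2 c2 i j k + outer3 d2 e2 f2 i j k))}"

end

theory Submission
  imports Defs
begin

definition det2 :: "(bool \<Rightarrow> bool \<Rightarrow> real) \<Rightarrow> real" where
  "det2 M = M False False * M True True - M False True * M True False"

definition br :: "vec2 \<Rightarrow> vec2 \<Rightarrow> real" where
  "br x y = x False * y True - x True * y False"

definition is3 :: "tensor3 \<Rightarrow> bool" where
  "is3 p \<longleftrightarrow> (\<exists>a1 b1 c1 a2 b2 c2 a3 b3 c3.
      nonneg2 a1 \<and> nonneg2 b1 \<and> nonneg2 c1 \<and>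
      nonneg2 a2 \<and> nonneg2 b2 \<and> nonneg2 c2 \<and>
      nonneg2 a3 \<and> nonneg2 b3 \<and> nonneg2 c3 \<and>
      p = (\<lambda>i j k. outer3 a1 b1 c1 i j k + outer3 a2 b2 c2 i j k + outer3 a3 b3 c3 i j k))"

lemma slice_pos:
  assumes nn: "\<forall>j k. 0 \<le> P j k" and d: "det2 P \<ge> 0"
  shows "\<exists>t \<beta> \<gamma>. 0 \<le> t \<and> nonneg2 \<beta> \<and> nonneg2 \<gamma> \<and>
     (\<forall>j k. P j k = (if \<not> j \<and> \<not> k then t else 0) + \<beta> j * \<gamma> k)"
proof (cases "P True True > 0")
  case True
  define t where "t = det2 P / P True True"
  define \<beta> where "\<beta> = (\<lambda>j. if j then 1 else P False True / P True True)"
  define \<gamma> where "\<gamma> = (\<lambda>k. if k then P True True else P True False)"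
  have "0 \<le> t" using d True unfolding t_def by simp
  moreover have "nonneg2 \<beta>" using nn True unfolding \<beta>_def nonneg2_def by simp
  moreover have "nonneg2 \<gamma>" using nn unfolding \<gamma>_def nonneg2_def by simp
  moreover have "\<forall>j k. P j k = (if \<not> j \<and> \<not> k then t else 0) + \<beta> j * \<gamma> k"
  proof (intro allI)
    fix j k show "P j k = (if \<not> j \<and> \<not> k then t else 0) + \<beta> j * \<gamma> k"
      using True by (cases j; cases k) (simp_all add: t_def \<beta>_def \<gamma>_def det2_def field_simps)
  qed
  ultimately show ?thesis by blast
next
  case False
  hence z: "P True True = 0" using nn[rule_format, of True True] by linarith
  have "P False True * P True False \<le> 0" using d z unfolding det2_def by simp
  moreover have "0 \<le> P False True * P True False" using nn by simp
  ultimately have "P False True = 0 \<or> P True False = 0" by simp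
  thus ?thesis
  proof
    assume h: "P False True = 0"
    show ?thesis
      apply (rule exI[of _ "P False False"], rule exI[of _ "\<lambda>j. if j then 1 else 0"],
             rule exI[of _ "\<lambda>k. if k then 0 else P True False"])
      using nn h z by (auto simp: nonneg2_def split: if_splits)
  next
    assume h: "P True False = 0"
    show ?thesis
      apply (rule exI[of _ "P False False"], rule exI[of _ "\<lambda>j. if j then 0 else 1"],
             rule exI[of _ "\<lambda>k. if k then P False True else 0"])
      using nn h z by (auto simp: nonneg2_def split: if_splits) (metis (full_types))
  qed
qed

lemma mode1:
  assumes nn: "\<forall>i j k. 0 \<le> p i j k" and d0: "det2 (p False) \<ge> 0" and d1: "det2 (p True) \<ge> 0"
  shows "is3 p"
proof -
  obtain t0 \<beta>0 \<gamma>0 where h0: "0 \<le> t0" "nonneg2 \<beta>0" "nonneg2 \<gamma>0"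
     "\<forall>j k. p False j k = (if \<not> j \<and> \<not> k then t0 else 0) + \<beta>0 j * \<gamma>0 k"
    using slice_pos[of "p False"] nn d0 by blast
  obtain t1 \<beta>1 \<gamma>1 where h1: "0 \<le> t1" "nonneg2 \<beta>1" "nonneg2 \<gamma>1"
     "\<forall>j k. p True j k = (if \<not> j \<and> \<not> k then t1 else 0) + \<beta>1 j * \<gamma>1 k"
    using slice_pos[of "p True"] nn d1 by blast
  show ?thesis unfolding is3_def
    apply (rule exI[of _ "\<lambda>i. if i then t1 else t0"], rule exI[of _ "\<lambda>j. if j then 0 else 1"],
       rule exI[of _ "\<lambda>j. if j then 0 else 1"],
       rule exI[of _ "\<lambda>i. if i then 0 else 1"], rule exI[of _ \<beta>0], rule exI[of _ \<gamma>0],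
       rule exI[of _ "\<lambda>i. if i then 1 else 0"], rule exI[of _ \<beta>1], rule exI[of _ \<gamma>1])
    using h0 h1 apply (simp add: nonneg2_def outer3_def)
    apply (intro ext)
    subgoal for i j k by (cases i; cases j; cases k) simp_all
    done
qed

lemma is3_swap12: assumes "is3 p" shows "is3 (\<lambda>i j k. p j i k)"
  using assms unfolding is3_def
  apply (elim exE conjE)
  subgoal for a1 b1 c1 a2 b2 c2 a3 b3 c3
    apply (rule exI[of _ b1], rule exI[of _ a1], rule exI[of _ c1],
           rule exI[of _ b2], rule exI[of _ a2], rule exI[of _ c2],
           rule exI[of _ b3], rule exI[of _ a3], rule exI[of _ c3])
    by (simp add: outer3_def fun_eq_iff)
  done

lemma is3_swap13: assumes "is3 p" shows "is3 (\<lambda>i j k. p k j i)"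
  using assms unfolding is3_def
  apply (elim exE conjE)
  subgoal for a1 b1 c1 a2 b2 c2 a3 b3 c3
    apply (rule exI[of _ c1], rule exI[of _ b1], rule exI[of _ a1],
           rule exI[of _ c2], rule exI[of _ b2], rule exI[of _ a2],
           rule exI[of _ c3], rule exI[of _ b3], rule exI[of _ a3])
    by (simp add: outer3_def fun_eq_iff)
  done

lemma is3_flip: assumes "is3 p" shows "is3 (\<lambda>i j k. p i j (\<not> k))"
  using assms unfolding is3_def
  apply (elim exE conjE)
  subgoal for a1 b1 c1 a2 b2 c2 a3 b3 c3
    apply (rule exI[of _ a1], rule exI[of _ b1], rule exI[of _ "\<lambda>k. c1 (\<not> k)"],
           rule exI[of _ a2], rule exI[of _ b2], rule exI[of _ "\<lambda>k. c2 (\<not> k)"],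
           rule exI[of _ a3], rule exI[of _ b3], rule exI[of _ "\<lambda>k. c3 (\<not> k)"])
    by (simp add: outer3_def fun_eq_iff nonneg2_def)
  done

lemma good1:
  assumes nn: "\<forall>i j k. 0 \<le> p i j k"
    and d: "(det2 (p False) \<ge> 0 \<and> det2 (p True) \<ge> 0) \<or> (det2 (p False) \<le> 0 \<and> det2 (p True) \<le> 0)"
  shows "is3 p"
  using d
proof
  assume "det2 (p False) \<ge> 0 \<and> det2 (p True) \<ge> 0"
  thus ?thesis using mode1 nn by blast
next
  assume h: "det2 (p False) \<le> 0 \<and> det2 (p True) \<le> 0"
  let ?q = "\<lambda>i j k. p i j (\<not> k)"
  have "\<And>i. det2 (?q i) = - det2 (p i)" by (simp add: det2_def)
  hence "is3 ?q" using h nn by (intro mode1) auto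
  from is3_flip[OF this] show ?thesis by simp
qed

lemma good2:
  assumes nn: "\<forall>i j k. 0 \<le> p i j k"
    and d: "(det2 (\<lambda>i k. p i False k) \<ge> 0 \<and> det2 (\<lambda>i k. p i True k) \<ge> 0) \<or>
            (det2 (\<lambda>i k. p i False k) \<le> 0 \<and> det2 (\<lambda>i k. p i True k) \<le> 0)"
  shows "is3 p"
proof -
  have "is3 (\<lambda>i j k. p j i k)" using nn d by (intro good1) auto
  from is3_swap12[OF this] show ?thesis by simp
qed

lemma good3:
  assumes nn: "\<forall>i j k. 0 \<le> p i j k"
    and d: "(det2 (\<lambda>j i. p i j False) \<ge> 0 \<and> det2 (\<lambda>j i. p i j True) \<ge> 0) \<or>
            (det2 (\<lambda>j i. p i j False) \<le> 0 \<and> det2 (\<lambda>j i. p i j True) \<le> 0)"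
  shows "is3 p"
proof -
  have "is3 (\<lambda>i j k. p k j i)" using nn d by (intro good1) auto
  from is3_swap13[OF this] show ?thesis by simp
qed

lemma comb:
  fixes u v x0 y0 x1 y1 :: real
  assumes "D0 = u * x0 + v * y0" "D1 = u * x1 + v * y1" "x0\<ge>0" "y0\<ge>0" "x1\<ge>0" "y1\<ge>0" "u * v \<ge> 0"
  shows "(D0\<ge>0 \<and> D1\<ge>0) \<or> (D0\<le>0 \<and> D1\<le>0)"
proof -
  have "(u \<ge> 0 \<and> v \<ge> 0) \<or> (u \<le> 0 \<and> v \<le> 0)" using assms(7) by (simp add: zero_le_mult_iff)
  thus ?thesis
  proof
    assume "u \<ge> 0 \<and> v \<ge> 0" thus ?thesis using assms by (simp add: add_nonneg_nonneg)
  next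
    assume "u \<le> 0 \<and> v \<le> 0" thus ?thesis using assms
      by (simp add: add_nonpos_nonpos mult_nonpos_nonneg)
  qed
qed

lemma ids:
  fixes a1 b1 c1 d1 e1 f1 a2 b2 c2 d2 e2 f2 :: vec2
  assumes q1: "q1 = (\<lambda>i j k. outer3 a1 b1 c1 i j k + outer3 d1 e1 f1 i j k)"
    and q2: "q2 = (\<lambda>i j k. outer3 a2 b2 c2 i j k + outer3 d2 e2 f2 i j k)"
    and p: "p = (\<lambda>i j k. q1 i j k * q2 i j k)"
  shows "det2 (p i) = (br b1 e1 * br c1 f1) * (a1 i * d1 i * q2 i False True * q2 i True False)
           + (br b2 e2 * br c2 f2) * (a2 i * d2 i * q1 i False False * q1 i True True)"
    and "det2 (\<lambda>i k. p i j k) = (br a1 d1 * br c1 f1) * (b1 j * e1 j * q2 False j True * q2 True j False)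
           + (br a2 d2 * br c2 f2) * (b2 j * e2 j * q1 False j False * q1 True j True)"
    and "det2 (\<lambda>j i. p i j k) = (br b1 e1 * br a1 d1) * (c1 k * f1 k * q2 False True k * q2 True False k)
           + (br b2 e2 * br a2 d2) * (c2 k * f2 k * q1 False False k * q1 True True k)"
  unfolding p q1 q2 det2_def br_def outer3_def by algebra+

lemma rbm_is3:
  assumes "nonneg2 a1" "nonneg2 b1" "nonneg2 c1" "nonneg2 d1" "nonneg2 e1" "nonneg2 f1"
    "nonneg2 a2" "nonneg2 b2" "nonneg2 c2" "nonneg2 d2" "nonneg2 e2" "nonneg2 f2"
    and pdef: "p = (\<lambda>i j k. (outer3 a1 b1 c1 i j k + outer3 d1 e1 f1 i j k) *
                   (outer3 a2 b2 c2 i j k + outer3 d2 e2 f2 i j k))"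
  shows "is3 p"
proof -
  have v: "\<And>x. 0 \<le> a1 x" "\<And>x. 0 \<le> b1 x" "\<And>x. 0 \<le> c1 x" "\<And>x. 0 \<le> d1 x" "\<And>x. 0 \<le> e1 x" "\<And>x. 0 \<le> f1 x"
    "\<And>x. 0 \<le> a2 x" "\<And>x. 0 \<le> b2 x" "\<And>x. 0 \<le> c2 x" "\<And>x. 0 \<le> d2 x" "\<And>x. 0 \<le> e2 x" "\<And>x. 0 \<le> f2 x"
    using assms(1-12) unfolding nonneg2_def by auto
  define q1 where "q1 = (\<lambda>i j k. outer3 a1 b1 c1 i j k + outer3 d1 e1 f1 i j k)"
  define q2 where "q2 = (\<lambda>i j k. outer3 a2 b2 c2 i j k + outer3 d2 e2 f2 i j k)"
  have p: "p = (\<lambda>i j k. q1 i j k * q2 i j k)" unfolding pdef q1_def q2_def by simp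
  have q1n: "\<And>i j k. 0 \<le> q1 i j k" unfolding q1_def outer3_def using v by simp
  have q2n: "\<And>i j k. 0 \<le> q2 i j k" unfolding q2_def outer3_def using v by simp
  have nn: "\<forall>i j k. 0 \<le> p i j k" unfolding p using q1n q2n by simp
  note I = ids[OF q1_def q2_def p]
  define u1 where "u1 = br b1 e1 * br c1 f1"
  define v1 where "v1 = br b2 e2 * br c2 f2"
  define u2 where "u2 = br a1 d1 * br c1 f1"
  define v2 where "v2 = br a2 d2 * br c2 f2"
  define u3 where "u3 = br b1 e1 * br a1 d1"
  define v3 where "v3 = br b2 e2 * br a2 d2"
  have X: "(u1 * v1) * (u2 * v2) * (u3 * v3) \<ge> 0"
  proof -
    have "(u1 * v1) * (u2 * v2) * (u3 * v3) =
          (br a1 d1 * br b1 e1 * br c1 f1 * br a2 d2 * br b2 e2 * br c2 f2)^2"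
      unfolding u1_def v1_def u2_def v2_def u3_def v3_def by algebra
    thus ?thesis by simp
  qed
  have c: "\<And>x y z w :: real. 0 \<le> x \<Longrightarrow> 0 \<le> y \<Longrightarrow> 0 \<le> z \<Longrightarrow> 0 \<le> w \<Longrightarrow> 0 \<le> x * y * z * w"
    by simp
  show ?thesis
  proof (cases "u1 * v1 \<ge> 0")
    case True
    show ?thesis
      apply (rule good1[OF nn])
      apply (rule comb[OF I(1)[of False, folded u1_def v1_def] I(1)[of True, folded u1_def v1_def]])
      using True by (auto intro!: c simp: v q1n q2n)
  next
    case F1: False
    show ?thesis
    proof (cases "u2 * v2 \<ge> 0")
      case True
      show ?thesis
        apply (rule good2[OF nn])
        apply (rule comb[OF I(2)[of False, folded u2_def v2_def] I(2)[of True, folded u2_def v2_def]])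
        using True by (auto intro!: c simp: v q1n q2n)
    next
      case F2: False
      have "u3 * v3 \<ge> 0"
      proof (rule ccontr)
        assume F3: "\<not> u3 * v3 \<ge> 0"
        have "(u1 * v1) * (u2 * v2) > 0" using F1 F2 by (simp add: mult_neg_neg)
        hence "(u1 * v1) * (u2 * v2) * (u3 * v3) < 0" using F3 by (simp add: mult_pos_neg)
        thus False using X by simp
      qed
      show ?thesis
        apply (rule good3[OF nn])
        apply (rule comb[OF I(3)[of False, folded u3_def v3_def] I(3)[of True, folded u3_def v3_def]])
        using \<open>u3 * v3 \<ge> 0\<close> by (auto intro!: c simp: v q1n q2n)
    qed
  qed
qed

theorem mainTheorem4:
  shows "RBM32 \<subseteq> M33"
proof
  fix p assume "p \<in> RBM32"
  thus "p \<in> M33" unfolding RBM32_def M33_def mem_Collect_eq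
    apply (elim conjE exE)
    apply (rule conjI, assumption)
    apply (rule rbm_is3[unfolded is3_def, rotated 12], assumption)
    by assumption+
qed

end
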